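(* Let $G=(V\cup\{O\},E)$ be a connected, unweighted, undirected graph, where $V$ is a set of $n$ terminals and $O\notin V$ is the depot, and let $k\in[1,n]$ be an integer tour capacity. Let $\mathrm{OPT}$ be an optimal solution to the graphic CVRP on this instance, let $T=z_1z_2\dots z_p$ be a tour in $\mathrm{OPT}$, let $U\subseteq V$ be the (nonempty) set of terminals whose demands are covered by $T$, and let $D=\sum_{v\in U}\mathrm{dist}(v)$. Then \[ \mathrm{cost}(T)\geq \frac{2D}{|U|}+\frac{|U|}{2}-\frac{1}{2|U|}. \]
   Context: For $v\in V$, $\mathrm{dist}(v)$ is the number of edges on a shortest $v$-to-$O$ path in $G$. A tour is a walk $z_1z_2\dots z_p$ in $G$ with $z_1=z_p=O$ and $(z_i,z_{i+1})\in E$ for all $i\in[1,p-1]$; its cost $\mathrm{cost}(T)$ is $p-1$. In the graphic CVRP, each terminal has unit demand; a feasible solution is a set of tours together with an assignment of each terminal to exactly one tour that visits it (that tour covers its demand), such that each tour covers at most $k$ terminals. The cost of a solution is the total cost of its tours; an optimal solution is a feasible solution of minimum cost. *)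

theory Defs
  imports Complex_Main
begin

definition graph_ok :: "'a set \<Rightarrow> ('a \<times> 'a) set \<Rightarrow> bool" where
  "graph_ok W E \<longleftrightarrow> finite W \<and> E \<subseteq> W \<times> W \<and> sym E \<and> irrefl E"

definition connected_graph :: "'a set \<Rightarrow> ('a \<times> 'a) set \<Rightarrow> bool" where
  "connected_graph W E \<longleftrightarrow> (\<forall>u\<in>W. \<forall>v\<in>W. (u, v) \<in> E\<^sup>*)"

definition is_walk :: "('a \<times> 'a) set \<Rightarrow> 'a list \<Rightarrow> bool" where
  "is_walk E zs \<longleftrightarrow> zs \<noteq> [] \<and> (\<forall>i. Suc i < length zs \<longrightarrow> (zs ! i, zs ! Suc i) \<in> E)"

definition dist :: "('a \<times> 'a) set \<Rightarrow> 'a \<Rightarrow> 'a \<Rightarrow> nat" where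
  "dist E dep v = (LEAST m. \<exists>zs. is_walk E zs \<and> hd zs = v \<and> last zs = dep \<and> length zs = Suc m)"

definition is_tour :: "('a \<times> 'a) set \<Rightarrow> 'a \<Rightarrow> 'a list \<Rightarrow> bool" where
  "is_tour E dep zs \<longleftrightarrow> is_walk E zs \<and> hd zs = dep \<and> last zs = dep"

definition tour_cost :: "'a list \<Rightarrow> nat" where
  "tour_cost zs = length zs - 1"

(* A feasible CVRP solution: a set S of tours together with an assignment
   \<sigma> of each terminal to one tour of S that visits it; each tour covers at most k terminals. *)
definition feasible_sol ::
  "('a \<times> 'a) set \<Rightarrow> 'a \<Rightarrow> 'a set \<Rightarrow> nat \<Rightarrow> 'a list set \<Rightarrow> ('a \<Rightarrow> 'a list) \<Rightarrow> bool" where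
  "feasible_sol E dep V k S \<sigma> \<longleftrightarrow>
     finite S \<and> (\<forall>T\<in>S. is_tour E dep T) \<and>
     (\<forall>v\<in>V. \<sigma> v \<in> S \<and> v \<in> set (\<sigma> v)) \<and>
     (\<forall>T\<in>S. card {v\<in>V. \<sigma> v = T} \<le> k)"

definition sol_cost :: "'a list set \<Rightarrow> nat" where
  "sol_cost S = (\<Sum>T\<in>S. tour_cost T)"

definition optimal_sol ::
  "('a \<times> 'a) set \<Rightarrow> 'a \<Rightarrow> 'a set \<Rightarrow> nat \<Rightarrow> 'a list set \<Rightarrow> ('a \<Rightarrow> 'a list) \<Rightarrow> bool" where
  "optimal_sol E dep V k S \<sigma> \<longleftrightarrow> feasible_sol E dep V k S \<sigma> \<and>
     (\<forall>S' \<sigma>'. feasible_sol E dep V k S' \<sigma>' \<longrightarrow> sol_cost S \<le> sol_cost S')"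

end

theory Submission
  imports Defs
begin

lemma key_sum:
  "finite P \<Longrightarrow> P \<subseteq> {..L} \<Longrightarrow>
   4 * (\<Sum>t\<in>P. int (min t (L - t))) \<le> 2 * int (card P) * int L - int (card P)^2 + 1"
proof (induction "card P" arbitrary: P rule: less_induct)
  case less
  show ?case
  proof (cases "card P \<le> 1")
    case True
    then consider "card P = 0" | "card P = 1" by linarith
    then show ?thesis
    proof cases
      case 1 then show ?thesis using less.prems by simp
    next
      case 2
      then obtain t where "P = {t}" using card_1_singletonE by blast
      then show ?thesis by simp
    qed
  next
    case False
    define a where "a = Min P"
    define b where "b = Max P"
    have ne: "P \<noteq> {}" using False by auto
    have aP: "a \<in> P" and bP: "b \<in> P" using ne less.prems a_def b_def by auto
    have sub: "P \<subseteq> {a..b}" using less.prems a_def b_def by auto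
    have "card P \<le> card {a..b}" using card_mono[OF _ sub] by simp
    hence cb: "card P \<le> b + 1 - a" by simp
    have ab: "a < b"
    proof (rule ccontr)
      assume "\<not> a < b"
      hence "{a..b} \<subseteq> {a}" by auto
      hence "P \<subseteq> {a}" using sub by blast
      hence "card P \<le> 1" using card_mono[of "{a}" P] by simp
      thus False using False by simp
    qed
    define P' where "P' = P - {a, b}"
    have cP': "card P' = card P - 2" using aP bP ab less.prems(1) P'_def
      by (simp add: card_Diff_subset)
    have IH: "4 * (\<Sum>t\<in>P'. int (min t (L - t))) \<le> 2 * int (card P') * int L - int (card P')^2 + 1"
      using less.hyps[of P'] cP' False less.prems P'_def by auto
    have bL: "b \<le> L" using bP less.prems by auto
    have split: "(\<Sum>t\<in>P. int (min t (L - t))) = int (min a (L - a)) + int (min b (L - b)) + (\<Sum>t\<in>P'. int (min t (L - t)))"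
    proof -
      have "P = insert a (insert b P')" using aP bP P'_def by auto
      moreover have "a \<notin> insert b P'" "b \<notin> P'" using ab P'_def by auto
      moreover have "finite P'" using less.prems P'_def by auto
      ultimately show ?thesis by simp
    qed
    have two: "int (min a (L - a)) + int (min b (L - b)) \<le> int L - (int (card P) - 1)"
      using cb ab bL by linarith
    have c2: "int (card P') = int (card P) - 2" using cP' False by simp
    show ?thesis using IH two split c2 by (simp add: power2_eq_square algebra_simps)
  qed
qed

lemma dist_le:
  assumes "is_walk E zs" "hd zs = v" "last zs = dep" "length zs = Suc m"
  shows "dist E dep v \<le> m"
  unfolding dist_def by (rule Least_le) (use assms in blast)

theorem mainTheorem3:
  fixes V :: "'a set" and dep :: 'a and E :: "('a \<times> 'a) set" and n k :: nat
    and S :: "'a list set" and \<sigma> :: "'a \<Rightarrow> 'a list" and T :: "'a list"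
  assumes "graph_ok (insert dep V) E"
    and "connected_graph (insert dep V) E"
    and "dep \<notin> V"
    and "card V = n"
    and "1 \<le> k" and "k \<le> n"
    and "optimal_sol E dep V k S \<sigma>"
    and "T \<in> S"
    and "U = {v\<in>V. \<sigma> v = T}"
    and "U \<noteq> {}"
    and "D = (\<Sum>v\<in>U. dist E dep v)"
  shows "real (tour_cost T) \<ge> 2 * real D / real (card U) + real (card U) / 2 - 1 / (2 * real (card U))"
proof -
  have symE: "sym E" and finV: "finite V" using assms(1) unfolding graph_ok_def by auto
  have feas: "feasible_sol E dep V k S \<sigma>" using assms(7) unfolding optimal_sol_def by simp
  have tour: "is_tour E dep T" using feas assms(8) unfolding feasible_sol_def by auto
  have walk: "is_walk E T" and hdT: "hd T = dep" and lastT: "last T = dep"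
    using tour unfolding is_tour_def by auto
  have Tne: "T \<noteq> []" using walk unfolding is_walk_def by simp
  define L where "L = length T - 1"
  have lenT: "length T = Suc L" using Tne L_def by simp
  have finU: "finite U" using finV assms(9) by simp
  have inT: "\<forall>v\<in>U. v \<in> set T" using feas assms(9) unfolding feasible_sol_def by auto
  define pos where "pos v = (SOME i. i < length T \<and> T ! i = v)" for v
  have pos: "pos v < length T \<and> T ! pos v = v" if "v \<in> U" for v
  proof -
    have "\<exists>i. i < length T \<and> T ! i = v" using inT that by (simp add: in_set_conv_nth)
    thus ?thesis unfolding pos_def by (rule someI_ex)
  qed
  have injp: "inj_on pos U" by (rule inj_onI) (metis pos)
  have dle: "dist E dep v \<le> min (pos v) (L - pos v)" if "v \<in> U" for v
  proof -
    let ?t = "pos v"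
    have tl: "?t \<le> L" and Tt: "T ! ?t = v" using pos[OF that] lenT by auto
    have d1: "dist E dep v \<le> L - ?t"
    proof (rule dist_le)
      show "is_walk E (drop ?t T)" using walk tl lenT unfolding is_walk_def by auto
      show "hd (drop ?t T) = v" using Tt tl lenT by (simp add: hd_drop_conv_nth)
      show "last (drop ?t T) = dep" using lastT tl lenT by simp
      show "length (drop ?t T) = Suc (L - ?t)" using tl lenT by simp
    qed
    have d2: "dist E dep v \<le> ?t"
    proof (rule dist_le)
      show "is_walk E (rev (take (Suc ?t) T))"
        unfolding is_walk_def
      proof (intro conjI allI impI)
        show "rev (take (Suc ?t) T) \<noteq> []" using Tne by simp
        fix i assume i: "Suc i < length (rev (take (Suc ?t) T))"
        hence i2: "Suc i \<le> ?t" using tl lenT by simp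
        have "(T ! (?t - Suc i), T ! Suc (?t - Suc i)) \<in> E"
          using walk i2 tl lenT unfolding is_walk_def by auto
        hence "(T ! Suc (?t - Suc i), T ! (?t - Suc i)) \<in> E" using symE by (meson symD)
        moreover have "Suc (?t - Suc i) = ?t - i" using i2 by simp
        ultimately show "(rev (take (Suc ?t) T) ! i, rev (take (Suc ?t) T) ! Suc i) \<in> E"
          using i2 tl lenT by (simp add: rev_nth)
      qed
      have "last (take (Suc ?t) T) = T ! ?t" using tl lenT
        by (subst take_Suc_conv_app_nth) auto
      then show "hd (rev (take (Suc ?t) T)) = v" using Tt by (simp add: hd_rev)
      show "last (rev (take (Suc ?t) T)) = dep" using hdT Tne
        by (simp add: last_rev hd_conv_nth)
      show "length (rev (take (Suc ?t) T)) = Suc ?t" using tl lenT by simp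
    qed
    show ?thesis using d1 d2 by simp
  qed
  define P where "P = pos ` U"
  have Psub: "P \<subseteq> {..L}" using pos lenT P_def by fastforce
  have cP: "card P = card U" using injp P_def by (simp add: card_image)
  have h1: "D \<le> (\<Sum>v\<in>U. min (pos v) (L - pos v))"
    unfolding assms(11) using dle by (rule sum_mono)
  have h2: "(\<Sum>v\<in>U. min (pos v) (L - pos v)) = (\<Sum>t\<in>P. min t (L - t))"
    unfolding P_def by (simp add: sum.reindex[OF injp])
  have h3: "int (\<Sum>t\<in>P. min t (L - t)) = (\<Sum>t\<in>P. int (min t (L - t)))"
    by (rule of_nat_sum)
  have fP: "finite P" using finU P_def by simp
  have "4 * int D \<le> 4 * (\<Sum>t\<in>P. int (min t (L - t)))"
    using h1 h2 h3 by linarith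
  also have "\<dots> \<le> 2 * int (card U) * int L - int (card U)^2 + 1"
    using key_sum[OF fP Psub] cP by simp
  finally have I: "4 * int D \<le> 2 * int (card U) * int L - int (card U)^2 + 1" .
  define m where "m = real (card U)"
  have R0: "real_of_int (4 * int D) \<le> real_of_int (2 * int (card U) * int L - int (card U)^2 + 1)"
    using I by (simp only: of_int_le_iff)
  hence R: "4 * real D \<le> 2 * m * real L - m^2 + 1" unfolding m_def by simp
  have m0: "m > 0" using finU assms(10) m_def by (simp add: card_gt_0_iff)
  have tc: "real (tour_cost T) = real L" unfolding tour_cost_def L_def by simp
  have eq: "2 * real D / m + m / 2 - 1 / (2 * m) = (4 * real D + m^2 - 1) / (2 * m)"
    using m0 by (simp add: field_simps power2_eq_square)
  have "(4 * real D + m^2 - 1) / (2 * m) \<le> real L"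
    using m0 R by (simp add: divide_le_eq algebra_simps)
  then show ?thesis unfolding tc m_def[symmetric] eq .
qed

end
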